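(* Let $G=(V,E)$ be a finite simple graph with $n=|V|$ vertices and $m=|E|$ edges, where $n+m$ is even, and let $L$ be its connection matrix. Then $L^2$ is similar over $\mathbb{R}$ to a real symplectic matrix, i.e. to a matrix $S$ satisfying $S^TJS=J$, where $J=\begin{pmatrix}0&I\\-I&0\end{pmatrix}$ is the standard $(n+m)\times(n+m)$ symplectic form.
   Context: Let $G=(V,E)$ be a finite simple graph. Its associated $1$-dimensional simplicial complex is the set of simplices $X=\{\{v\}: v\in V\}\cup E$, where each edge is regarded as a $2$-element subset of $V$; index $(|V|+|E|)\times(|V|+|E|)$ matrices by $X$. The connection matrix $L$ has $L(x,y)=1$ if $x\cap y\neq\emptyset$ and $L(x,y)=0$ otherwise. *)

theory Defs
  imports "Jordan_Normal_Form.Matrix"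
begin

definition simple_graph :: "'a set \<Rightarrow> 'a set set \<Rightarrow> bool" where
  "simple_graph V E \<longleftrightarrow> finite V \<and> (\<forall>e\<in>E. e \<subseteq> V \<and> card e = 2)"

definition simplices :: "'a set \<Rightarrow> 'a set set \<Rightarrow> 'a set set" where
  "simplices V E = (\<lambda>v. {v}) ` V \<union> E"

text \<open>Connection matrix, with rows/columns indexed by simplices via an
enumeration f of the simplices by 0..<N.\<close>
definition connection_mat :: "nat \<Rightarrow> (nat \<Rightarrow> 'a set) \<Rightarrow> real mat" where
  "connection_mat N f = mat N N (\<lambda>(i,j). if f i \<inter> f j \<noteq> {} then 1 else 0)"

definition std_symplectic :: "nat \<Rightarrow> real mat" where
  "std_symplectic k = four_block_mat (0\<^sub>m k k) (1\<^sub>m k) (- 1\<^sub>m k) (0\<^sub>m k k)"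

definition symplectic_mat :: "nat \<Rightarrow> real mat \<Rightarrow> bool" where
  "symplectic_mat k S \<longleftrightarrow> S \<in> carrier_mat (2*k) (2*k) \<and>
     transpose_mat S * std_symplectic k * S = std_symplectic k"

end

theory Submission
  imports Defs "Jordan_Normal_Form.Jordan_Normal_Form_Uniqueness" "Jordan_Normal_Form.Jordan_Normal_Form_Existence"
    "HOL-Combinatorics.List_Permutation"
begin


lemma conj_mult_mat_vec_real:
  fixes A :: "real mat" and v :: "complex vec"
  assumes A: "A \<in> carrier_mat n n" and v: "v \<in> carrier_vec n"
  shows "conjugate (map_mat complex_of_real A *\<^sub>v v) = map_mat complex_of_real A *\<^sub>v conjugate v"
proof (rule eq_vecI)
  fix i assume i: "i < dim_vec (map_mat complex_of_real A *\<^sub>v conjugate v)"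
  hence i: "i < n" using A by auto
  have "conjugate (map_mat complex_of_real A *\<^sub>v v) $ i = conjugate (\<Sum>j<n. complex_of_real (A $$ (i,j)) * v $ j)"
    using A v i by (auto simp: mult_mat_vec_def scalar_prod_def lessThan_atLeast0)
  also have "\<dots> = (\<Sum>j<n. complex_of_real (A $$ (i,j)) * conjugate (v $ j))"
    by (subst sum_conjugate, auto simp: conjugate_dist_mul)
  also have "\<dots> = (map_mat complex_of_real A *\<^sub>v conjugate v) $ i"
    using A v i by (auto simp: mult_mat_vec_def scalar_prod_def lessThan_atLeast0)
  finally show "conjugate (map_mat complex_of_real A *\<^sub>v v) $ i = (map_mat complex_of_real A *\<^sub>v conjugate v) $ i" .
qed (insert A, auto)

lemma sym_real_eigenvalue_real:
  fixes A :: "real mat"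
  assumes A: "A \<in> carrier_mat n n" and sym: "transpose_mat A = A"
    and ev: "eigenvalue (map_mat complex_of_real A) a"
  shows "cnj a = a"
proof -
  let ?A = "map_mat complex_of_real A"
  have Ac: "?A \<in> carrier_mat n n" using A by auto
  have symc: "transpose_mat ?A = ?A"
  proof -
    have "transpose_mat ?A = map_mat complex_of_real (transpose_mat A)" by (rule eq_matI, auto)
    thus ?thesis using sym by simp
  qed
  from ev obtain v where v: "v \<in> carrier_vec n" "v \<noteq> 0\<^sub>v n" and Av: "?A *\<^sub>v v = a \<cdot>\<^sub>v v"
    unfolding eigenvalue_def eigenvector_def using Ac by auto
  define p where "p = v \<bullet> conjugate v"
  define q where "q = (?A *\<^sub>v v) \<bullet> conjugate v"
  have q: "q = a * p" unfolding q_def p_def Av using v by auto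
  have p0: "p \<noteq> 0" unfolding p_def using conjugate_square_eq_0_vec[OF v(1)] v(2) by auto
  have cp: "conjugate p = p" unfolding p_def
    using conjugate_vec_sprod_comm[OF v(1) v(1)] conjugate_conjugate_sprod[OF v(1) v(1)] by simp
  have "conjugate q = conjugate (?A *\<^sub>v v) \<bullet> conjugate (conjugate v)"
    unfolding q_def by (rule conjugate_sprod_vec[of _ n], insert v Ac, auto)
  also have "\<dots> = (?A *\<^sub>v conjugate v) \<bullet> v" using conj_mult_mat_vec_real[OF A v(1)] by simp
  also have "\<dots> = (transpose_mat ?A *\<^sub>v conjugate v) \<bullet> v" using symc by simp
  also have "\<dots> = conjugate v \<bullet> (?A *\<^sub>v v)" by (rule transpose_vec_mult_scalar[OF Ac v(1)], insert v, auto)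
  also have "\<dots> = q" unfolding q_def by (rule comm_scalar_prod[of _ n], insert v Ac, auto)
  finally have cq: "conjugate q = q" .
  have "conjugate a * p = a * p" using cq cp unfolding q by (simp add: conjugate_dist_mul)
  thus ?thesis using p0 by simp
qed

lemma sym_real_char_poly_split:
  fixes A :: "real mat"
  assumes A: "A \<in> carrier_mat n n" and sym: "transpose_mat A = A"
  shows "\<exists>es. char_poly A = (\<Prod>e\<leftarrow>es. [:- e, 1:])"
proof -
  let ?A = "map_mat complex_of_real A"
  have Ac: "?A \<in> carrier_mat n n" using A by auto
  from char_poly_factorized[OF Ac] obtain as where cp: "char_poly ?A = (\<Prod>a\<leftarrow>as. [:- a, 1:])" by auto
  have real: "\<And>a. a \<in> set as \<Longrightarrow> complex_of_real (Re a) = a"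
  proof -
    fix a assume a: "a \<in> set as"
    have "poly (char_poly ?A) a = 0" unfolding cp using a
      by (induct as, auto)
    hence "eigenvalue ?A a" using eigenvalue_root_char_poly[OF Ac] by simp
    from sym_real_eigenvalue_real[OF A sym this] have "Im (cnj a) = Im a" by simp
    hence "Im a = 0" by simp
    thus "complex_of_real (Re a) = a" by (simp add: complex_eq_iff)
  qed
  have "char_poly ?A = map_poly complex_of_real (char_poly A)"
    by (rule of_real_hom.char_poly_hom[OF A])
  moreover have "map_poly complex_of_real (\<Prod>e\<leftarrow>map Re as. [:- e, 1:]) = (\<Prod>a\<leftarrow>as. [:- a, 1:])"
  proof -
    interpret mp: map_poly_comm_ring_hom "complex_of_real" ..
    have "map_poly complex_of_real (\<Prod>e\<leftarrow>map Re as. [:- e, 1:]) = (\<Prod>a\<leftarrow>map (\<lambda>x. complex_of_real (Re x)) as. [:- a, 1:])"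
      unfolding mp.hom_prod_list map_map by (intro arg_cong[of _ _ prod_list], auto)
    also have "map (\<lambda>x. complex_of_real (Re x)) as = as" using real by (induct as, auto)
    finally show ?thesis .
  qed
  ultimately have h: "map_poly complex_of_real (char_poly A) = map_poly complex_of_real (\<Prod>e\<leftarrow>map Re as. [:- e, 1:])"
    using cp by simp
  have "char_poly A = (\<Prod>e\<leftarrow>map Re as. [:- e, 1:])"
  proof -
    have "map_poly Re (map_poly complex_of_real (char_poly A)) = map_poly Re (map_poly complex_of_real (\<Prod>e\<leftarrow>map Re as. [:- e, 1:]))"
      by (simp only: h)
    thus ?thesis by (simp add: map_poly_map_poly o_def)
  qed
  thus ?thesis by blast
qed




lemma kernel_dim_mono:
  fixes A D :: "'a :: field mat"
  assumes A: "A \<in> carrier_mat nr n" and D: "D \<in> carrier_mat nr' n"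
    and sub: "mat_kernel A \<subseteq> mat_kernel D"
  shows "kernel_dim A \<le> kernel_dim D"
proof -
  interpret KA: kernel nr n A by (unfold_locales, rule A)
  interpret KD: kernel nr' n D by (unfold_locales, rule D)
  from kernel_basis_exists[OF A] obtain bA where fA: "finite bA" and bA: "KA.basis bA" by auto
  from kernel_basis_exists[OF D] obtain bD where fD: "finite bD" and bD: "KD.basis bD" by auto
  have subA: "bA \<subseteq> mat_kernel A" and liA: "\<not> KA.lin_dep bA"
    using bA unfolding KA.Ker.basis_def by auto
  have subD: "bA \<subseteq> mat_kernel D" using subA sub by auto
  have "\<not> KD.lin_dep bA" using liA KA.lindep_same[OF subA] KD.lindep_same[OF subD] by simp
  moreover have "KD.Ker.fin_dim" unfolding KD.Ker.fin_dim_def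
    using fD bD unfolding KD.Ker.basis_def by auto
  ultimately have "card bA \<le> KD.dim" using KD.Ker.li_le_dim(2)[of bA] subD by auto
  moreover have "KA.dim = card bA" using KA.Ker.dim_basis[OF fA bA] .
  ultimately show ?thesis using A D by (simp add: kernel_dim_def)
qed

lemma real_sprod_self_0:
  fixes v :: "real vec"
  assumes "v \<in> carrier_vec n" and "v \<bullet> v = 0"
  shows "v = 0\<^sub>v n"
  using conjugate_square_eq_0_vec[OF assms(1)] assms(2) by simp

lemma sym_kernel_sq:
  fixes C :: "real mat"
  assumes C: "C \<in> carrier_mat n n" and sym: "transpose_mat C = C"
  shows "mat_kernel (C * C) = mat_kernel C"
proof
  show "mat_kernel C \<subseteq> mat_kernel (C * C)"
  proof
    fix v assume "v \<in> mat_kernel C"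
    hence v: "v \<in> carrier_vec n" "C *\<^sub>v v = 0\<^sub>v n" using mat_kernelD[OF C] by auto
    have "(C * C) *\<^sub>v v = C *\<^sub>v (C *\<^sub>v v)" using C v by auto
    also have "\<dots> = 0\<^sub>v n" using v C by auto
    finally show "v \<in> mat_kernel (C * C)" by (intro mat_kernelI[of _ n n], insert C v, auto)
  qed
  show "mat_kernel (C * C) \<subseteq> mat_kernel C"
  proof
    fix v assume "v \<in> mat_kernel (C * C)"
    hence v: "v \<in> carrier_vec n" and CC: "(C * C) *\<^sub>v v = 0\<^sub>v n" using mat_kernelD[of "C * C" n n] C by auto
    have "(C *\<^sub>v v) \<bullet> (C *\<^sub>v v) = (transpose_mat C *\<^sub>v v) \<bullet> (C *\<^sub>v v)" using sym by simp
    also have "\<dots> = v \<bullet> (C *\<^sub>v (C *\<^sub>v v))" by (rule transpose_vec_mult_scalar[OF C], insert C v, auto)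
    also have "C *\<^sub>v (C *\<^sub>v v) = 0\<^sub>v n" using CC C v by (metis assoc_mult_mat_vec)
    also have "v \<bullet> 0\<^sub>v n = 0" using v by simp
    finally have "C *\<^sub>v v = 0\<^sub>v n" using real_sprod_self_0[of "C *\<^sub>v v" n] C v by auto
    thus "v \<in> mat_kernel C" by (intro mat_kernelI[OF C v])
  qed
qed

lemma sum_list_min12:
  "sum_list (map (min (2::nat)) xs) = sum_list (map (min 1) xs) \<Longrightarrow> x \<in> set xs \<Longrightarrow> x \<le> 1"
proof (induct xs)
  case (Cons y ys)
  have a: "min 1 y \<le> min 2 y" by simp
  have b: "sum_list (map (min 1) ys) \<le> sum_list (map (min (2::nat)) ys)"
    by (induct ys, auto)
  from Cons(2) a b have "min 1 y = min 2 y" "sum_list (map (min 1) ys) = sum_list (map (min (2::nat)) ys)" by auto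
  thus ?case using Cons by auto
qed simp

definition diagm :: "'a :: zero list \<Rightarrow> 'a mat" where
  "diagm ds = mat (length ds) (length ds) (\<lambda>(i,j). if i = j then ds ! i else 0)"

lemma diagm_carrier[simp]: "diagm ds \<in> carrier_mat (length ds) (length ds)"
  unfolding diagm_def by auto

lemma diagm_dim[simp]: "dim_row (diagm ds) = length ds" "dim_col (diagm ds) = length ds"
  unfolding diagm_def by auto

lemma diagm_index[simp]: "i < length ds \<Longrightarrow> j < length ds \<Longrightarrow> diagm ds $$ (i,j) = (if i = j then ds ! i else 0)"
  unfolding diagm_def by auto

lemma jordan_matrix_ones: "jordan_matrix (map (\<lambda>e. (1,e)) ds) = diagm ds"
proof (induct ds)
  case Nil
  show ?case unfolding jordan_matrix_def diagm_def by (intro eq_matI, auto)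
next
  case (Cons d ds)
  have j: "jordan_matrix (map (\<lambda>e. (1,e)) (d # ds)) = four_block_mat (jordan_block 1 d) (0\<^sub>m 1 (length ds)) (0\<^sub>m (length ds) 1) (diagm ds)"
    using Cons unfolding jordan_matrix_def by (simp add: Let_def)
  show ?case unfolding j diagm_def
    by (intro eq_matI, auto simp: nth_Cons')
qed

lemma sym_real_diagonalize:
  fixes M :: "real mat"
  assumes M: "M \<in> carrier_mat n n" and sym: "transpose_mat M = M"
  shows "\<exists>ds. length ds = n \<and> similar_mat M (diagm ds) \<and> (\<forall>\<mu>. count (mset ds) \<mu> = kernel_dim (char_matrix M \<mu>))"
proof -
  from sym_real_char_poly_split[OF M sym] obtain es where "char_poly M = (\<Prod>e\<leftarrow>es. [:- e, 1:])" by auto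
  from jordan_nf_exists[OF M this] obtain n_as where jnf: "jordan_nf M n_as" by auto
  have C1: "\<And>e. char_matrix M e ^\<^sub>m 1 = char_matrix M e" using M by simp
  have C2: "\<And>e. char_matrix M e ^\<^sub>m 2 = char_matrix M e * char_matrix M e"
    using M by (simp add: numeral_2_eq_2)
  have symM: "\<And>i j. i < n \<Longrightarrow> j < n \<Longrightarrow> M $$ (j,i) = M $$ (i,j)"
  proof -
    fix i j assume "i < n" "j < n"
    thus "M $$ (j,i) = M $$ (i,j)" using arg_cong[OF sym, of "\<lambda>A. A $$ (i,j)"] M by auto
  qed
  have symC: "\<And>e. transpose_mat (char_matrix M e) = char_matrix M e"
    unfolding char_matrix_def using M symM by (intro eq_matI, auto)
  have Cc: "\<And>e. char_matrix M e \<in> carrier_mat n n" using M by simp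
  have dimeq: "\<And>e. dim_gen_eigenspace M e 2 = dim_gen_eigenspace M e 1"
  proof -
    fix e
    have "kernel_dim (char_matrix M e * char_matrix M e) = kernel_dim (char_matrix M e)"
      using kernel_dim_mono[of _ n n, OF _ Cc] kernel_dim_mono[of _ n n, OF Cc]
        sym_kernel_sq[OF Cc symC] Cc by (metis le_antisym mult_carrier_mat order_refl)
    thus "dim_gen_eigenspace M e 2 = dim_gen_eigenspace M e 1"
      unfolding dim_gen_eigenspace_def C1 C2 .
  qed
  have ones: "\<And>k e. (k,e) \<in> set n_as \<Longrightarrow> k = 1"
  proof -
    fix k e assume ke: "(k,e) \<in> set n_as"
    have "sum_list (map (min 2) (map fst [(n, e')\<leftarrow>n_as . e' = e])) = sum_list (map (min 1) (map fst [(n, e')\<leftarrow>n_as . e' = e]))"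
      using dimeq[of e] dim_gen_eigenspace[OF jnf, of e] by (metis (no_types, lifting) map_eq_conv)
    moreover have "k \<in> set (map fst [(n, e')\<leftarrow>n_as . e' = e])" using ke by force
    ultimately have "k \<le> 1" by (rule sum_list_min12)
    moreover have "k \<noteq> 0" using jnf ke unfolding jordan_nf_def by force
    ultimately show "k = 1" by simp
  qed
  define ds where "ds = map snd n_as"
  have nas: "n_as = map (\<lambda>e. (1,e)) ds" unfolding ds_def using ones
    by (induct n_as, auto)
  have sim: "similar_mat M (diagm ds)" using jnf unfolding jordan_nf_def nas jordan_matrix_ones by simp
  have len: "length ds = n"
  proof -
    from similar_matD[OF sim] obtain n' where "M \<in> carrier_mat n' n'" "diagm ds \<in> carrier_mat n' n'" by blast
    thus ?thesis using M unfolding carrier_mat_def by auto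
  qed
  have cnt: "\<forall>\<mu>. count (mset ds) \<mu> = kernel_dim (char_matrix M \<mu>)"
  proof
    fix \<mu>
    have "kernel_dim (char_matrix M \<mu>) = dim_gen_eigenspace M \<mu> 1" unfolding dim_gen_eigenspace_def C1 ..
    also have "\<dots> = (\<Sum> n \<leftarrow> map fst [(n, e)\<leftarrow>n_as . e = \<mu>]. min 1 n)" by (rule dim_gen_eigenspace[OF jnf])
    also have "\<dots> = count (mset ds) \<mu>" unfolding nas by (induct ds, simp_all)
    finally show "count (mset ds) \<mu> = kernel_dim (char_matrix M \<mu>)" by simp
  qed
  show ?thesis using len sim cnt by blast
qed




lemma skew_sprod_0:
  fixes Om :: "real mat"
  assumes Om: "Om \<in> carrier_mat n n" and skew: "transpose_mat Om = - Om" and v: "v \<in> carrier_vec n"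
  shows "v \<bullet> (Om *\<^sub>v v) = 0"
proof -
  have "v \<bullet> (Om *\<^sub>v v) = (transpose_mat Om *\<^sub>v v) \<bullet> v"
    by (rule transpose_vec_mult_scalar[OF Om v v, symmetric])
  also have "\<dots> = (- (Om *\<^sub>v v)) \<bullet> v" using skew Om v by simp
  also have "\<dots> = - ((Om *\<^sub>v v) \<bullet> v)" using Om v by simp
  also have "(Om *\<^sub>v v) \<bullet> v = v \<bullet> (Om *\<^sub>v v)" by (rule comm_scalar_prod[of _ n], insert Om v, auto)
  finally show ?thesis by simp
qed

lemma inverse_from_injective:
  fixes X :: "real mat"
  assumes X: "X \<in> carrier_mat n n" and inj: "\<And>v. v \<in> carrier_vec n \<Longrightarrow> X *\<^sub>v v = 0\<^sub>v n \<Longrightarrow> v = 0\<^sub>v n"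
  shows "\<exists>Y. Y \<in> carrier_mat n n \<and> X * Y = 1\<^sub>m n \<and> Y * X = 1\<^sub>m n"
proof -
  have "det X \<noteq> 0" using det_0_iff_vec_prod_zero[OF X] inj by auto
  from det_non_zero_imp_unit[OF X this, unfolded Units_def, of "()"]
  show ?thesis by (auto simp: ring_mat_def)
qed

lemma char_matrix_mult_vec:
  fixes M :: "real mat"
  assumes M: "M \<in> carrier_mat n n" and v: "v \<in> carrier_vec n"
  shows "char_matrix M e *\<^sub>v v = M *\<^sub>v v - e \<cdot>\<^sub>v v"
  unfolding char_matrix_def using M v
  by (subst add_mult_distrib_mat_vec[of _ n n], auto)

lemma dims_pair:
  fixes M Om :: "real mat"
  assumes M: "M \<in> carrier_mat n n" and Om: "Om \<in> carrier_mat n n"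
    and symM: "transpose_mat M = M" and skew: "transpose_mat Om = - Om"
    and MOM: "M * Om * M = Om"
    and fix1: "\<And>v. v \<in> carrier_vec n \<Longrightarrow> Om *\<^sub>v v = 0\<^sub>v n \<Longrightarrow> M *\<^sub>v v = v"
    and mu: "\<mu> \<noteq> 0" "\<mu> \<noteq> 1"
  shows "kernel_dim (char_matrix M \<mu>) \<le> kernel_dim (char_matrix M (inverse \<mu>))"
proof -
  define A where "A = char_matrix M \<mu>"
  define C where "C = char_matrix M (inverse \<mu>)"
  define X where "X = Om + A * A"
  have A: "A \<in> carrier_mat n n" and C: "C \<in> carrier_mat n n" using M unfolding A_def C_def by auto
  have X: "X \<in> carrier_mat n n" using A Om unfolding X_def by auto
  have symMe: "\<And>i j. i < n \<Longrightarrow> j < n \<Longrightarrow> M $$ (j,i) = M $$ (i,j)"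
  proof -
    fix i j assume "i < n" "j < n"
    thus "M $$ (j,i) = M $$ (i,j)" using arg_cong[OF symM, of "\<lambda>A. A $$ (i,j)"] M by auto
  qed
  have symA: "transpose_mat A = A" unfolding A_def char_matrix_def using M symMe
    by (intro eq_matI, auto)
  have Av: "\<And>v. v \<in> carrier_vec n \<Longrightarrow> A *\<^sub>v v = M *\<^sub>v v - \<mu> \<cdot>\<^sub>v v"
    unfolding A_def by (rule char_matrix_mult_vec[OF M])
  have Cv: "\<And>v. v \<in> carrier_vec n \<Longrightarrow> C *\<^sub>v v = M *\<^sub>v v - inverse \<mu> \<cdot>\<^sub>v v"
    unfolding C_def by (rule char_matrix_mult_vec[OF M])
  have Xv: "\<And>v. v \<in> carrier_vec n \<Longrightarrow> X *\<^sub>v v = Om *\<^sub>v v + A *\<^sub>v (A *\<^sub>v v)"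
    unfolding X_def using Om A by (subst add_mult_distrib_mat_vec[of _ n n], auto)
  have inj: "\<And>v. v \<in> carrier_vec n \<Longrightarrow> X *\<^sub>v v = 0\<^sub>v n \<Longrightarrow> v = 0\<^sub>v n"
  proof -
    fix v :: "real vec" assume v: "v \<in> carrier_vec n" and Xv0: "X *\<^sub>v v = 0\<^sub>v n"
    have "0 = v \<bullet> (X *\<^sub>v v)" using Xv0 v by simp
    also have "\<dots> = v \<bullet> (Om *\<^sub>v v) + v \<bullet> (A *\<^sub>v (A *\<^sub>v v))" unfolding Xv[OF v]
      by (rule scalar_prod_add_distrib[of _ n], insert v Om A, auto)
    also have "v \<bullet> (Om *\<^sub>v v) = 0" by (rule skew_sprod_0[OF Om skew v])
    also have "v \<bullet> (A *\<^sub>v (A *\<^sub>v v)) = (transpose_mat A *\<^sub>v v) \<bullet> (A *\<^sub>v v)"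
      by (rule transpose_vec_mult_scalar[symmetric, OF A], insert A v, auto)
    finally have "(A *\<^sub>v v) \<bullet> (A *\<^sub>v v) = 0" unfolding symA by simp
    hence Av0: "A *\<^sub>v v = 0\<^sub>v n" using real_sprod_self_0[of "A *\<^sub>v v" n] A v by auto
    have A0: "A *\<^sub>v 0\<^sub>v n = 0\<^sub>v n" using A by (intro eq_vecI, auto)
    have Omv: "Om *\<^sub>v v \<in> carrier_vec n" using Om v by auto
    have "Om *\<^sub>v v = Om *\<^sub>v v + A *\<^sub>v (A *\<^sub>v v)" unfolding Av0 A0 using Omv by simp
    hence "Om *\<^sub>v v = 0\<^sub>v n" using Xv0 Xv[OF v] by simp
    hence Mv: "M *\<^sub>v v = v" using fix1 v by auto
    from Av0 Av[OF v] Mv have "v - \<mu> \<cdot>\<^sub>v v = 0\<^sub>v n" by simp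
    note h = this
    show "v = 0\<^sub>v n"
    proof (rule eq_vecI)
      fix i assume i: "i < dim_vec (0\<^sub>v n :: real vec)"
      hence "(v - \<mu> \<cdot>\<^sub>v v) $ i = 0" using h by simp
      hence "v $ i - \<mu> * v $ i = 0" using v i by simp
      hence "(1 - \<mu>) * v $ i = 0" by (simp add: algebra_simps)
      thus "v $ i = 0\<^sub>v n $ i" using mu i by simp
    qed (use v in auto)
  qed
  from inverse_from_injective[OF X inj] obtain Y where Y: "Y \<in> carrier_mat n n" and XY: "X * Y = 1\<^sub>m n" by auto
  have "kernel.dim n (C * X) = kernel.dim n C" by (rule mat_kernel_dim_mult_eq_right[OF C X Y XY])
  hence eq: "kernel_dim (C * X) = kernel_dim C" using C X by (simp add: kernel_dim_def)
  have sub: "mat_kernel A \<subseteq> mat_kernel (C * X)"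
  proof
    fix v assume "v \<in> mat_kernel A"
    hence v: "v \<in> carrier_vec n" and Av0: "A *\<^sub>v v = 0\<^sub>v n" using mat_kernelD[OF A] by auto
    have h: "M *\<^sub>v v - \<mu> \<cdot>\<^sub>v v = 0\<^sub>v n" using Av0 Av[OF v] by simp
    have Mv: "M *\<^sub>v v = \<mu> \<cdot>\<^sub>v v"
    proof (rule eq_vecI)
      fix i assume i: "i < dim_vec (\<mu> \<cdot>\<^sub>v v)"
      hence "(M *\<^sub>v v - \<mu> \<cdot>\<^sub>v v) $ i = 0" using h v by simp
      thus "(M *\<^sub>v v) $ i = (\<mu> \<cdot>\<^sub>v v) $ i" using i v M by simp
    qed (use v M in auto)
    define w where "w = Om *\<^sub>v v"
    have w: "w \<in> carrier_vec n" unfolding w_def using Om v by auto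
    have "w = (M * Om * M) *\<^sub>v v" unfolding w_def MOM ..
    also have "\<dots> = (M * Om) *\<^sub>v (M *\<^sub>v v)" by (rule assoc_mult_mat_vec[of _ n n _ n], insert M Om v, auto)
    also have "\<dots> = M *\<^sub>v (Om *\<^sub>v (M *\<^sub>v v))" by (rule assoc_mult_mat_vec[of _ n n _ n], insert M Om v, auto)
    also have "\<dots> = \<mu> \<cdot>\<^sub>v (M *\<^sub>v w)" unfolding Mv w_def using M Om v
      by (simp add: mult_mat_vec)
    finally have wh: "w = \<mu> \<cdot>\<^sub>v (M *\<^sub>v w)" .
    have "inverse \<mu> \<cdot>\<^sub>v w = M *\<^sub>v w"
    proof (rule eq_vecI)
      fix i assume i: "i < dim_vec (M *\<^sub>v w)"
      have "w $ i = \<mu> * (M *\<^sub>v w) $ i" using arg_cong[OF wh, of "\<lambda>x. x $ i"] i M by simp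
      thus "(inverse \<mu> \<cdot>\<^sub>v w) $ i = (M *\<^sub>v w) $ i" using i M w mu by (simp add: field_simps)
    qed (use M w in auto)
    hence Cw: "C *\<^sub>v w = 0\<^sub>v n" using Cv[OF w] M w by simp
    have "(C * X) *\<^sub>v v = C *\<^sub>v (X *\<^sub>v v)" using C X v by auto
    also have "X *\<^sub>v v = w" unfolding Xv[OF v] Av0 w_def
    proof -
      have A0: "A *\<^sub>v 0\<^sub>v n = 0\<^sub>v n" using A by (intro eq_vecI, auto)
      have Omv: "Om *\<^sub>v v \<in> carrier_vec n" using Om v by auto
      show "Om *\<^sub>v v + A *\<^sub>v 0\<^sub>v n = Om *\<^sub>v v" unfolding A0 using Omv by simp
    qed
    finally have "(C * X) *\<^sub>v v = 0\<^sub>v n" using Cw by simp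
    thus "v \<in> mat_kernel (C * X)" by (intro mat_kernelI[of _ n n], insert C X v, auto)
  qed
  have "kernel_dim A \<le> kernel_dim (C * X)" by (rule kernel_dim_mono[OF A _ sub], insert C X, auto)
  thus ?thesis using eq unfolding A_def C_def by simp
qed




lemma rep_mset_add: "replicate_mset (a + b) x = replicate_mset a x + replicate_mset b x"
  by (induct a) auto

lemma pair_mset:
  fixes A :: "real multiset"
  assumes "\<forall>x\<in>#A. x > 0" "\<forall>\<mu>. \<mu> \<noteq> 1 \<longrightarrow> count A \<mu> = count A (inverse \<mu>)" "even (size A)"
  shows "\<exists>as. A = mset (as @ map inverse as)"
  using assms
proof (induct "size A" arbitrary: A rule: less_induct)
  case less
  show ?case
  proof (cases "\<exists>x\<in>#A. x \<noteq> 1")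
    case True
    then obtain x where x: "x \<in># A" "x \<noteq> 1" by auto
    have xpos: "x > 0" using x less(2) by auto
    have xinv: "inverse x \<noteq> x"
    proof
      assume "inverse x = x"
      hence "x * x = 1" using xpos by (metis right_inverse less_irrefl)
      hence "(x - 1) * (x + 1) = 0" by (simp add: algebra_simps)
      thus False using x xpos by auto
    qed
    have "count A (inverse x) = count A x" using less(3)[rule_format, of x] x by simp
    moreover have "count A x > 0" using x by simp
    ultimately have ix: "inverse x \<in># A" by (metis count_greater_zero_iff)
    define B where "B = {#x, inverse x#}"
    have BA: "B \<subseteq># A" unfolding B_def subseteq_mset_def
    proof
      fix a
      show "count {#x, inverse x#} a \<le> count A a"
        using x ix xinv by (cases "a = x"; cases "a = inverse x", auto)
    qed
    define A' where "A' = A - B"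
    have cB: "\<And>\<mu>. count B (inverse \<mu>) = count B \<mu>" unfolding B_def
      by (auto simp: inverse_eq_iff_eq)
    have "size B \<le> size A" by (rule size_mset_mono[OF BA])
    moreover have "size B = 2" unfolding B_def by simp
    ultimately have sA': "size A' < size A" "size A' = size A - 2" unfolding A'_def using BA
      by (auto simp: size_Diff_submset)
    have h1: "\<forall>x\<in>#A'. x > 0" using less(2) unfolding A'_def by (meson in_diffD)
    have h2: "\<forall>\<mu>. \<mu> \<noteq> 1 \<longrightarrow> count A' \<mu> = count A' (inverse \<mu>)"
    proof (intro allI impI)
      fix \<mu> :: real assume mu: "\<mu> \<noteq> 1"
      have "count A' \<mu> = count A \<mu> - count B \<mu>" unfolding A'_def by simp
      also have "count A \<mu> = count A (inverse \<mu>)" using less(3) mu by blast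
      also have "count B \<mu> = count B (inverse \<mu>)" using cB[of \<mu>] by simp
      finally show "count A' \<mu> = count A' (inverse \<mu>)" unfolding A'_def by simp
    qed
    have h3: "even (size A')" using sA' less(4) by auto
    from less(1)[OF sA'(1) h1 h2 h3] obtain as where as: "A' = mset (as @ map inverse as)" by auto
    have "A = A' + B" unfolding A'_def using BA by (simp add: subset_mset.diff_add)
    hence "A = mset ((x # as) @ map inverse (x # as))" unfolding as B_def by auto
    thus ?thesis by blast
  next
    case False
    hence "set_mset A \<subseteq> {1}" by auto
    hence A: "A = replicate_mset (size A) 1" by (metis set_mset_subset_singletonD)
    define as where "as = replicate (size A div 2) (1::real)"
    have "size A = size A div 2 + size A div 2" using less(4) by auto
    hence "mset (as @ map inverse as) = replicate_mset (size A) 1"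
      unfolding as_def by (metis rep_mset_add mset_append mset_replicate map_replicate inverse_1)
    thus ?thesis using A by metis
  qed
qed




lemma diagm_mult_left:
  assumes A: "A \<in> carrier_mat n nc" and len: "length ds = n"
  shows "diagm ds * A = mat n nc (\<lambda>(i,j). ds ! i * A $$ (i,j))"
proof (rule eq_matI)
  fix i j assume i: "i < dim_row (mat n nc (\<lambda>(i,j). ds ! i * A $$ (i,j)))" and j: "j < dim_col (mat n nc (\<lambda>(i,j). ds ! i * A $$ (i,j)))"
  hence i: "i < n" and j: "j < nc" by auto
  have "(diagm ds * A) $$ (i,j) = (\<Sum>k\<in>{0..<n}. diagm ds $$ (i,k) * A $$ (k,j))"
    using A len i j by (auto simp: scalar_prod_def)
  also have "\<dots> = (\<Sum>k\<in>{0..<n}. if i = k then ds ! i * A $$ (k,j) else 0)"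
    by (rule sum.cong, insert len i, auto)
  also have "\<dots> = ds ! i * A $$ (i,j)" using i by (simp add: sum.delta)
  finally show "(diagm ds * A) $$ (i,j) = mat n nc (\<lambda>(i,j). ds ! i * A $$ (i,j)) $$ (i,j)" using i j by simp
qed (insert A len, auto)

lemma diagm_mult_right:
  assumes A: "A \<in> carrier_mat nr n" and len: "length ds = n"
  shows "A * diagm ds = mat nr n (\<lambda>(i,j). A $$ (i,j) * ds ! j)"
proof (rule eq_matI)
  fix i j assume i: "i < dim_row (mat nr n (\<lambda>(i,j). A $$ (i,j) * ds ! j))" and j: "j < dim_col (mat nr n (\<lambda>(i,j). A $$ (i,j) * ds ! j))"
  hence i: "i < nr" and j: "j < n" by auto
  have "(A * diagm ds) $$ (i,j) = (\<Sum>k\<in>{0..<n}. A $$ (i,k) * diagm ds $$ (k,j))"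
    using A len i j by (auto simp: scalar_prod_def)
  also have "\<dots> = (\<Sum>k\<in>{0..<n}. if k = j then A $$ (i,k) * ds ! j else 0)"
    by (rule sum.cong, insert len j, auto)
  also have "\<dots> = A $$ (i,j) * ds ! j" using j by (simp add: sum.delta)
  finally show "(A * diagm ds) $$ (i,j) = mat nr n (\<lambda>(i,j). A $$ (i,j) * ds ! j) $$ (i,j)" using i j by simp
qed (insert A len, auto)

lemma diagm_perm:
  fixes xs ys :: "'a :: comm_ring_1 list"
  assumes m: "mset xs = mset ys"
  shows "similar_mat (diagm xs) (diagm ys)"
proof -
  define n where "n = length xs"
  have len: "length ys = n" unfolding n_def using mset_eq_length[OF m] by simp
  from permutation_Ex_bij[OF m] obtain f where bij: "bij_betw f {..<n} {..<n}"
    and xy: "\<And>i. i < n \<Longrightarrow> xs ! i = ys ! f i" unfolding n_def len[unfolded n_def] by auto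
  have fn: "\<And>i. i < n \<Longrightarrow> f i < n" using bij by (auto simp: bij_betw_def)
  have finj: "\<And>i j. i < n \<Longrightarrow> j < n \<Longrightarrow> f i = f j \<longleftrightarrow> i = j" using bij
    by (auto simp: bij_betw_def inj_on_def)
  define P :: "'a mat" where "P = mat n n (\<lambda>(i,j). if j = f i then 1 else 0)"
  define Q :: "'a mat" where "Q = mat n n (\<lambda>(i,j). if i = f j then 1 else 0)"
  have P: "P \<in> carrier_mat n n" and Q: "Q \<in> carrier_mat n n" unfolding P_def Q_def by auto
  have PQ: "P * Q = 1\<^sub>m n"
  proof (rule eq_matI)
    fix i j assume "i < dim_row (1\<^sub>m n :: 'a mat)" "j < dim_col (1\<^sub>m n :: 'a mat)"
    hence i: "i < n" and j: "j < n" by auto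
    have "(P * Q) $$ (i,j) = (\<Sum>k\<in>{0..<n}. (if k = f i then 1 else 0) * (if k = f j then 1 else 0))"
      using i j by (auto simp: P_def Q_def scalar_prod_def)
    also have "\<dots> = (\<Sum>k\<in>{0..<n}. if k = f i then (if f i = f j then 1 else 0) else 0)"
      by (rule sum.cong, auto)
    also have "\<dots> = (if f i = f j then 1 else 0)" using fn[OF i] by (simp add: sum.delta)
    also have "\<dots> = 1\<^sub>m n $$ (i,j)" using finj[OF i j] i j by simp
    finally show "(P * Q) $$ (i,j) = 1\<^sub>m n $$ (i,j)" .
  qed (insert P Q, auto)
  have reidx: "\<And>g :: nat \<Rightarrow> 'a. (\<Sum>k\<in>{0..<n}. g (f k)) = (\<Sum>l\<in>{0..<n}. g l)"
    using sum.reindex_bij_betw[OF bij] by (simp add: lessThan_atLeast0)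
  have QP: "Q * P = 1\<^sub>m n"
  proof (rule eq_matI)
    fix i j assume "i < dim_row (1\<^sub>m n :: 'a mat)" "j < dim_col (1\<^sub>m n :: 'a mat)"
    hence i: "i < n" and j: "j < n" by auto
    have "(Q * P) $$ (i,j) = (\<Sum>k\<in>{0..<n}. (\<lambda>l. (if i = l then 1 else 0) * (if j = l then 1 else 0)) (f k))"
      using i j by (auto simp: P_def Q_def scalar_prod_def)
    also have "\<dots> = (\<Sum>l\<in>{0..<n}. (if i = l then 1 else 0) * (if j = l then 1 else 0))" by (rule reidx)
    also have "\<dots> = (\<Sum>l\<in>{0..<n}. if i = l then (if j = i then 1 else 0) else 0)"
      by (rule sum.cong, auto)
    also have "\<dots> = 1\<^sub>m n $$ (i,j)" using i j by (simp add: sum.delta)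
    finally show "(Q * P) $$ (i,j) = 1\<^sub>m n $$ (i,j)" .
  qed (insert P Q, auto)
  have PD: "P * diagm ys = mat n n (\<lambda>(i,j). P $$ (i,j) * ys ! j)" by (rule diagm_mult_right[OF P len])
  have eq: "diagm xs = P * diagm ys * Q"
  proof (rule eq_matI)
    fix i j assume "i < dim_row (P * diagm ys * Q)" "j < dim_col (P * diagm ys * Q)"
    hence i: "i < n" and j: "j < n" using P Q by auto
    have "(P * diagm ys * Q) $$ (i,j) = (\<Sum>l\<in>{0..<n}. (P $$ (i,l) * ys ! l) * Q $$ (l,j))"
      unfolding PD using i j Q by (auto simp: scalar_prod_def)
    also have "\<dots> = (\<Sum>l\<in>{0..<n}. if l = f i then (if f i = f j then ys ! f i else 0) else 0)"
      by (rule sum.cong, insert i j, auto simp: P_def Q_def)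
    also have "\<dots> = (if f i = f j then ys ! f i else 0)" using fn[OF i] by (simp add: sum.delta)
    also have "\<dots> = diagm xs $$ (i,j)" using finj[OF i j] i j xy[OF i] n_def by (cases "i = j", auto)
    finally show "diagm xs $$ (i,j) = (P * diagm ys * Q) $$ (i,j)" by simp
  qed (insert P Q n_def, auto)
  show ?thesis
    by (rule similar_matI[of _ _ P Q n], insert P Q PQ QP eq len n_def, auto)
qed

lemma diag_symplectic:
  fixes as :: "real list"
  assumes nz: "\<forall>a\<in>set as. a \<noteq> 0"
  shows "symplectic_mat (length as) (diagm (as @ map inverse as))"
proof -
  define k where "k = length as"
  define ds where "ds = as @ map inverse as"
  define S where "S = diagm ds"
  have len: "length ds = 2 * k" unfolding ds_def k_def by simp
  have S: "S \<in> carrier_mat (2*k) (2*k)" unfolding S_def using len by (metis diagm_carrier)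
  have ST: "transpose_mat S = S" unfolding S_def by (intro eq_matI, auto)
  define J where "J = std_symplectic k"
  have J: "J \<in> carrier_mat (2*k) (2*k)" unfolding J_def std_symplectic_def
    by (metis four_block_carrier_mat mult_2 one_carrier_mat uminus_carrier_iff_mat zero_carrier_mat)
  have "S * J * S = mat (2*k) (2*k) (\<lambda>(i,j). ds ! i * J $$ (i,j) * ds ! j)"
    unfolding S_def diagm_mult_left[OF J len]
    by (subst diagm_mult_right[OF _ len], auto)
  also have "\<dots> = J"
  proof (rule eq_matI)
    fix i j assume "i < dim_row J" "j < dim_col J"
    hence i: "i < 2*k" and j: "j < 2*k" using J by auto
    have Jij: "J $$ (i,j) = (if i < k then (if j < k then 0 else (if j - k = i then 1 else 0))
       else (if j < k then (if i - k = j then -1 else 0) else 0))"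
      unfolding J_def std_symplectic_def using i j by (auto simp: mult_2)
    have e: "mat (2*k) (2*k) (\<lambda>(i,j). ds ! i * J $$ (i,j) * ds ! j) $$ (i,j) = ds ! i * J $$ (i,j) * ds ! j"
      using i j by simp
    have nz': "\<And>i. i < k \<Longrightarrow> as ! i \<noteq> 0" using nz unfolding k_def by auto
    show "mat (2*k) (2*k) (\<lambda>(i,j). ds ! i * J $$ (i,j) * ds ! j) $$ (i,j) = J $$ (i,j)"
      unfolding e Jij using i j nz' unfolding ds_def by (auto simp: nth_append k_def)
  qed (insert J, auto)
  finally have "transpose_mat S * J * S = J" unfolding ST .
  thus ?thesis unfolding symplectic_mat_def S_def ds_def k_def J_def using S[unfolded S_def ds_def k_def] by simp
qed




lemma kernel_dim_pos_nonzero: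
  fixes C :: "real mat"
  assumes C: "C \<in> carrier_mat n n" and pos: "kernel_dim C > 0"
  shows "\<exists>v. v \<in> carrier_vec n \<and> v \<noteq> 0\<^sub>v n \<and> C *\<^sub>v v = 0\<^sub>v n"
proof (rule ccontr)
  assume "\<not> ?thesis"
  hence nt: "\<And>v. v \<in> carrier_vec n \<Longrightarrow> C *\<^sub>v v = 0\<^sub>v n \<Longrightarrow> v = 0\<^sub>v n" by blast
  have "mat_kernel C \<subseteq> mat_kernel (1\<^sub>m n :: real mat)"
  proof
    fix v assume "v \<in> mat_kernel C"
    hence "v \<in> carrier_vec n" "C *\<^sub>v v = 0\<^sub>v n" using mat_kernelD[OF C] by auto
    hence "v = 0\<^sub>v n" using nt by blast
    thus "v \<in> mat_kernel (1\<^sub>m n :: real mat)" by (intro mat_kernelI[of "1\<^sub>m n" n n], auto)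
  qed
  from kernel_dim_mono[OF C one_carrier_mat this] have "kernel_dim C \<le> kernel_dim (1\<^sub>m n :: real mat)" .
  also have "\<dots> = 0" using kernel_one_mat(1)[of n] by (simp add: kernel_dim_def)
  finally show False using pos by simp
qed

lemma abstract_main:
  fixes L Li Om :: "real mat"
  assumes L: "L \<in> carrier_mat N N" and Li: "Li \<in> carrier_mat N N" and LiL: "Li * L = 1\<^sub>m N"
    and symL: "transpose_mat L = L" and Om: "Om \<in> carrier_mat N N" and skew: "transpose_mat Om = - Om"
    and LOL: "L * Om * L = - Om"
    and fix1: "\<And>v. v \<in> carrier_vec N \<Longrightarrow> Om *\<^sub>v v = 0\<^sub>v N \<Longrightarrow> L *\<^sub>v (L *\<^sub>v v) = v"
    and N: "N = 2 * k"
  shows "\<exists>S. symplectic_mat k S \<and> similar_mat (L * L) S"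
proof -
  define M where "M = L * L"
  have M: "M \<in> carrier_mat N N" unfolding M_def using L by auto
  have symM: "transpose_mat M = M" unfolding M_def transpose_mult[OF L L] symL ..
  have MOM: "M * Om * M = Om"
  proof -
    have LO: "L * Om \<in> carrier_mat N N" using L Om by simp
    have "M * Om * M = (L * (L * Om)) * (L * L)" unfolding M_def using L Om by simp
    also have "\<dots> = L * ((L * Om) * (L * L))" by (rule assoc_mult_mat[OF L LO], insert L, auto)
    also have "(L * Om) * (L * L) = ((L * Om) * L) * L" by (rule assoc_mult_mat[symmetric, OF LO L L])
    finally have "M * Om * M = L * ((L * Om * L) * L)" .
    also have "\<dots> = L * (- Om * L)" unfolding LOL ..
    also have "\<dots> = - (L * (Om * L))" using L Om by simp
    also have "L * (Om * L) = - Om" using LOL L Om by simp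
    finally show ?thesis by simp
  qed
  have Mv: "\<And>v. v \<in> carrier_vec N \<Longrightarrow> M *\<^sub>v v = L *\<^sub>v (L *\<^sub>v v)" unfolding M_def using L by auto
  have fixM: "\<And>v. v \<in> carrier_vec N \<Longrightarrow> Om *\<^sub>v v = 0\<^sub>v N \<Longrightarrow> M *\<^sub>v v = v" using fix1 Mv by auto
  from sym_real_diagonalize[OF M symM] obtain ds where len: "length ds = N"
    and sim: "similar_mat M (diagm ds)" and cnt: "\<And>\<mu>. count (mset ds) \<mu> = kernel_dim (char_matrix M \<mu>)" by auto
  have pos: "\<forall>x\<in>#mset ds. x > 0"
  proof
    fix \<mu> assume "\<mu> \<in># mset ds"
    hence "kernel_dim (char_matrix M \<mu>) > 0" using cnt[of \<mu>] by (metis count_greater_zero_iff)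
    from kernel_dim_pos_nonzero[OF char_matrix_closed[OF M] this] obtain v where
      v: "v \<in> carrier_vec N" "v \<noteq> 0\<^sub>v N" and Cv: "char_matrix M \<mu> *\<^sub>v v = 0\<^sub>v N" by auto
    have h: "M *\<^sub>v v - \<mu> \<cdot>\<^sub>v v = 0\<^sub>v N" using Cv char_matrix_mult_vec[OF M v(1)] by simp
    have Mmu: "M *\<^sub>v v = \<mu> \<cdot>\<^sub>v v"
    proof (rule eq_vecI)
      fix i assume i: "i < dim_vec (\<mu> \<cdot>\<^sub>v v)"
      hence "(M *\<^sub>v v - \<mu> \<cdot>\<^sub>v v) $ i = 0" using h v by simp
      thus "(M *\<^sub>v v) $ i = (\<mu> \<cdot>\<^sub>v v) $ i" using i v M by simp
    qed (use v M in auto)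
    have Lv: "L *\<^sub>v v \<noteq> 0\<^sub>v N"
    proof
      assume "L *\<^sub>v v = 0\<^sub>v N"
      hence "Li *\<^sub>v (L *\<^sub>v v) = 0\<^sub>v N" using Li by auto
      moreover have "Li *\<^sub>v (L *\<^sub>v v) = v" using LiL Li L v
        by (metis assoc_mult_mat_vec one_mult_mat_vec)
      ultimately show False using v by simp
    qed
    have Lvc: "L *\<^sub>v v \<in> carrier_vec N" using L v by auto
    have "(L *\<^sub>v v) \<bullet> (L *\<^sub>v v) > 0" using conjugate_square_greater_0_vec[OF Lvc] Lv by simp
    also have "(L *\<^sub>v v) \<bullet> (L *\<^sub>v v) = (transpose_mat L *\<^sub>v v) \<bullet> (L *\<^sub>v v)" unfolding symL ..
    also have "\<dots> = v \<bullet> (L *\<^sub>v (L *\<^sub>v v))" by (rule transpose_vec_mult_scalar[OF L Lvc v(1)])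
    also have "\<dots> = \<mu> * (v \<bullet> v)" unfolding Mv[OF v(1), symmetric] Mmu using v by simp
    finally have "\<mu> * (v \<bullet> v) > 0" .
    moreover have "v \<bullet> v > 0" using conjugate_square_greater_0_vec[OF v(1)] v(2) by simp
    ultimately show "\<mu> > 0" by (simp add: zero_less_mult_iff)
  qed
  have pair: "\<forall>\<mu>. \<mu> \<noteq> 1 \<longrightarrow> count (mset ds) \<mu> = count (mset ds) (inverse \<mu>)"
  proof (intro allI impI)
    fix \<mu> :: real assume mu1: "\<mu> \<noteq> 1"
    show "count (mset ds) \<mu> = count (mset ds) (inverse \<mu>)"
    proof (cases "\<mu> = 0")
      case True thus ?thesis by simp
    next
      case False
      have i0: "inverse \<mu> \<noteq> 0" "inverse \<mu> \<noteq> 1" using False mu1 by (auto simp: inverse_eq_iff_eq)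
      have "kernel_dim (char_matrix M \<mu>) \<le> kernel_dim (char_matrix M (inverse \<mu>))"
        by (rule dims_pair[OF M Om symM skew MOM fixM False mu1])
      moreover have "kernel_dim (char_matrix M (inverse \<mu>)) \<le> kernel_dim (char_matrix M (inverse (inverse \<mu>)))"
        by (rule dims_pair[OF M Om symM skew MOM fixM i0])
      ultimately show ?thesis unfolding cnt by simp
    qed
  qed
  have ev: "even (size (mset ds))" using len N by simp
  from pair_mset[OF pos pair ev] obtain as where as: "mset ds = mset (as @ map inverse as)" by auto
  have lenas: "length as = k" using mset_eq_length[OF as] len N by simp
  have nz: "\<forall>a\<in>set as. a \<noteq> 0"
  proof
    fix a assume "a \<in> set as"
    hence "a \<in># mset ds" unfolding as by simp
    thus "a \<noteq> 0" using pos by auto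
  qed
  have "similar_mat M (diagm (as @ map inverse as))"
    by (rule similar_mat_trans[OF sim diagm_perm[OF as]])
  moreover have "symplectic_mat k (diagm (as @ map inverse as))" using diag_symplectic[OF nz] lenas by simp
  ultimately show ?thesis unfolding M_def by blast
qed




lemma dl_gen: fixes A B C :: "real mat"
  assumes "A \<in> carrier_mat n n" "B \<in> carrier_mat n n" "C \<in> carrier_mat n n"
  shows "(A + B) * C = A * C + B * C"
  using add_mult_distrib_mat[OF assms] .

lemma dr_gen: fixes A B C :: "real mat"
  assumes "A \<in> carrier_mat n n" "B \<in> carrier_mat n n" "C \<in> carrier_mat n n"
  shows "A * (B + C) = A * B + A * C"
  using mult_add_distrib_mat[OF assms] .

lemma dlm_gen: fixes A B C :: "real mat"
  assumes "A \<in> carrier_mat n n" "B \<in> carrier_mat n n" "C \<in> carrier_mat n n"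
  shows "(A - B) * C = A * C - B * C"
  using minus_mult_distrib_mat[OF assms] .

lemma drm_gen: fixes A B C :: "real mat"
  assumes "A \<in> carrier_mat n n" "B \<in> carrier_mat n n" "C \<in> carrier_mat n n"
  shows "A * (B - C) = A * B - A * C"
  using mult_minus_distrib_mat[OF assms] .

lemma assoc5: fixes P Q X R S :: "real mat"
  assumes P: "P \<in> carrier_mat n n" and Q: "Q \<in> carrier_mat n n" and X: "X \<in> carrier_mat n n"
    and R: "R \<in> carrier_mat n n" and S: "S \<in> carrier_mat n n"
  shows "((P * Q) * X) * (R * S) = (P * ((Q * X) * R)) * S"
proof -
  have QO: "Q * X \<in> carrier_mat n n" using Q X by simp
  have QOR: "Q * X * R \<in> carrier_mat n n" using QO R by simp
  have RS: "R * S \<in> carrier_mat n n" using R S by simp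
  have "(P * Q) * X = P * (Q * X)" by (rule assoc_mult_mat[OF P Q X])
  hence "((P * Q) * X) * (R * S) = (P * (Q * X)) * (R * S)" by simp
  also have "\<dots> = P * ((Q * X) * (R * S))" by (rule assoc_mult_mat[OF P QO RS])
  also have "(Q * X) * (R * S) = ((Q * X) * R) * S" by (rule assoc_mult_mat[symmetric, OF QO R S])
  also have "P * (((Q * X) * R) * S) = (P * ((Q * X) * R)) * S" by (rule assoc_mult_mat[symmetric, OF P QOR S])
  finally show ?thesis .
qed

lemma mv_gen: fixes A B :: "real mat"
  assumes "A \<in> carrier_mat n n" "B \<in> carrier_mat n n" "v \<in> carrier_vec n"
  shows "(A * B) *\<^sub>v v = A *\<^sub>v (B *\<^sub>v v)"
  using assoc_mult_mat_vec[OF assms] .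

lemma rel_alg:
  fixes D Bm :: "real mat"
  assumes D: "D \<in> carrier_mat N N" and Bm: "Bm \<in> carrier_mat N N"
    and DD: "D * D = 1\<^sub>m N" and BB: "Bm * Bm = 0\<^sub>m N N" and BmD: "Bm * D = - Bm"
    and DBm: "D * Bm = Bm" and DT: "transpose_mat D = D"
  defines "Bt \<equiv> transpose_mat Bm"
  defines "L \<equiv> D + Bm + Bt + Bt * Bm"
  defines "Om \<equiv> Bm - Bt"
  shows "transpose_mat L = L" "L * Om * L = - Om"
    "\<And>v. v \<in> carrier_vec N \<Longrightarrow> Om *\<^sub>v v = 0\<^sub>v N \<Longrightarrow> L *\<^sub>v (L *\<^sub>v v) = v"
    "\<exists>Li. Li \<in> carrier_mat N N \<and> Li * L = 1\<^sub>m N"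
    "transpose_mat Om = - Om"
proof -
  have Bt: "Bt \<in> carrier_mat N N" unfolding Bt_def using Bm by simp
  have I: "1\<^sub>m N \<in> carrier_mat N N" by simp
  have BtBt: "Bt * Bt = 0\<^sub>m N N" unfolding Bt_def
    using arg_cong[OF BB, of transpose_mat] transpose_mult[OF Bm Bm] by simp
  have DBt: "D * Bt = - Bt" unfolding Bt_def
    using arg_cong[OF BmD, of transpose_mat] transpose_mult[OF Bm D] DT by (simp add: transpose_uminus)
  have BtD: "Bt * D = Bt" unfolding Bt_def
    using arg_cong[OF DBm, of transpose_mat] transpose_mult[OF D Bm] DT by simp
  have BtBm: "Bt * Bm \<in> carrier_mat N N" using Bt Bm by simp
  have L: "L \<in> carrier_mat N N" unfolding L_def using D Bm Bt by simp
  have Om: "Om \<in> carrier_mat N N" unfolding Om_def using Bm Bt by (simp add: minus_carrier_mat)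
  show "transpose_mat Om = - Om" unfolding Om_def Bt_def using Bm
    by (intro eq_matI, auto)
  have "transpose_mat (Bt * Bm) = Bt * Bm" unfolding Bt_def using transpose_mult[OF Bt[unfolded Bt_def] Bm] by simp
  thus "transpose_mat L = L" unfolding L_def using D Bm Bt BtBm DT
    apply (simp add: transpose_add Bt_def)
    apply (intro eq_matI, insert D Bm, auto)
    done
  note c = D Bm Bt I BtBm
  have L1: "L = (1\<^sub>m N + Bt) * (D + Bm)"
  proof -
    have "(1\<^sub>m N + Bt) * (D + Bm) = 1\<^sub>m N * (D + Bm) + Bt * (D + Bm)" by (rule dl_gen, insert c, auto)
    also have "Bt * (D + Bm) = Bt * D + Bt * Bm" by (rule dr_gen, insert c, auto)
    finally show ?thesis unfolding BtD L_def using c by (intro eq_matI, auto)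
  qed
  have L2: "L = (D + Bt) * (1\<^sub>m N + Bm)"
  proof -
    have "(D + Bt) * (1\<^sub>m N + Bm) = D * (1\<^sub>m N + Bm) + Bt * (1\<^sub>m N + Bm)" by (rule dl_gen, insert c, auto)
    also have "D * (1\<^sub>m N + Bm) = D * 1\<^sub>m N + D * Bm" by (rule dr_gen, insert c, auto)
    also have "Bt * (1\<^sub>m N + Bm) = Bt * 1\<^sub>m N + Bt * Bm" by (rule dr_gen, insert c, auto)
    finally show ?thesis unfolding DBm L_def using c by (intro eq_matI, auto)
  qed
  have X1a: "(1\<^sub>m N + Bm) * Om = Bm - Bt - Bm * Bt"
  proof -
    have "(1\<^sub>m N + Bm) * Om = 1\<^sub>m N * Om + Bm * Om" by (rule dl_gen, insert c Om, auto)
    also have "Bm * Om = Bm * Bm - Bm * Bt" unfolding Om_def by (rule drm_gen, insert c, auto)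
    finally show ?thesis unfolding BB Om_def using c by (intro eq_matI, auto)
  qed
  have X1: "(1\<^sub>m N + Bm) * Om * (1\<^sub>m N + Bt) = Om"
  proof -
    have BmBt: "Bm * Bt \<in> carrier_mat N N" using c by auto
    have e: "Bm - Bt - Bm * Bt = Bm + (- Bt - Bm * Bt)" using c by (intro eq_matI, auto)
    have "(Bm - Bt - Bm * Bt) * (1\<^sub>m N + Bt) = (Bm - Bt - Bm * Bt) * 1\<^sub>m N + (Bm - Bt - Bm * Bt) * Bt"
      by (rule dr_gen, insert c BmBt, auto intro: minus_carrier_mat)
    also have "(Bm - Bt - Bm * Bt) * Bt = (Bm - Bt) * Bt - Bm * Bt * Bt" by (rule dlm_gen, insert c BmBt, auto intro: minus_carrier_mat)
    also have "(Bm - Bt) * Bt = Bm * Bt - Bt * Bt" by (rule dlm_gen, insert c, auto)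
    also have "Bm * Bt * Bt = Bm * (Bt * Bt)" using c by simp
    finally have s2: "(Bm - Bt - Bm * Bt) * (1\<^sub>m N + Bt) = Bm - Bt - Bm * Bt + (Bm * Bt - 0\<^sub>m N N - 0\<^sub>m N N)"
      unfolding BtBt using c by simp
    have s1: "(1\<^sub>m N + Bm) * Om * (1\<^sub>m N + Bt) = (Bm - Bt - Bm * Bt) * (1\<^sub>m N + Bt)" by (simp only: X1a)
    show ?thesis
      apply (unfold s1 s2) apply (unfold Om_def) apply (insert c BmBt) by (intro eq_matI, auto)
  qed
  have X2a: "(D + Bt) * Om = Bm + Bt + Bt * Bm"
  proof -
    have "(D + Bt) * Om = D * Om + Bt * Om" by (rule dl_gen, insert c Om, auto)
    also have "D * Om = D * Bm - D * Bt" unfolding Om_def by (rule drm_gen, insert c, auto)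
    also have "Bt * Om = Bt * Bm - Bt * Bt" unfolding Om_def by (rule drm_gen, insert c, auto)
    finally show ?thesis unfolding DBm DBt BtBt using c by (intro eq_matI, auto)
  qed
  have BtBmD: "Bt * Bm * D = - (Bt * Bm)" using Bt Bm D BmD by simp
  have BtBmBm: "Bt * Bm * Bm = 0\<^sub>m N N" using Bt Bm BB by simp
  have X2: "(D + Bt) * Om * (D + Bm) = - Om"
  proof -
    have "(Bm + Bt + Bt * Bm) * (D + Bm) = (Bm + Bt + Bt * Bm) * D + (Bm + Bt + Bt * Bm) * Bm"
      by (rule dr_gen, insert c, auto)
    also have "(Bm + Bt + Bt * Bm) * D = (Bm + Bt) * D + Bt * Bm * D" by (rule dl_gen, insert c, auto)
    also have "(Bm + Bt) * D = Bm * D + Bt * D" by (rule dl_gen, insert c, auto)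
    also have "(Bm + Bt + Bt * Bm) * Bm = (Bm + Bt) * Bm + Bt * Bm * Bm" by (rule dl_gen, insert c, auto)
    also have "(Bm + Bt) * Bm = Bm * Bm + Bt * Bm" by (rule dl_gen, insert c, auto)
    finally have s2: "(Bm + Bt + Bt * Bm) * (D + Bm) = Bm * D + Bt * D + Bt * Bm * D + (Bm * Bm + Bt * Bm + Bt * Bm * Bm)" .
    have s1: "(D + Bt) * Om * (D + Bm) = (Bm + Bt + Bt * Bm) * (D + Bm)" by (simp only: X2a)
    show ?thesis
      apply (unfold s1 s2) apply (unfold BmD BtD BtBmD BB BtBmBm) apply (unfold Om_def) apply (insert c)
      by (intro eq_matI, auto)
  qed
  have P1: "(D + Bt) \<in> carrier_mat N N" "(1\<^sub>m N + Bm) \<in> carrier_mat N N" "(1\<^sub>m N + Bt) \<in> carrier_mat N N"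
    "(D + Bm) \<in> carrier_mat N N" using D Bm Bt by auto
  have e: "L * Om * L = ((D + Bt) * (1\<^sub>m N + Bm)) * Om * ((1\<^sub>m N + Bt) * (D + Bm))"
    by (metis L1 L2)
  have "L * Om * L = (D + Bt) * ((1\<^sub>m N + Bm) * Om * (1\<^sub>m N + Bt)) * (D + Bm)"
    unfolding e by (rule assoc5[OF P1(1) P1(2) Om P1(3) P1(4)])
  also have "\<dots> = - Om" unfolding X1 X2 ..
  finally show "L * Om * L = - Om" .
  have SS: "(D + Bm) * (D + Bm) = 1\<^sub>m N"
  proof -
    have "(D + Bm) * (D + Bm) = D * (D + Bm) + Bm * (D + Bm)" by (rule dl_gen, insert c, auto)
    also have "D * (D + Bm) = D * D + D * Bm" by (rule dr_gen, insert c, auto)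
    also have "Bm * (D + Bm) = Bm * D + Bm * Bm" by (rule dr_gen, insert c, auto)
    finally show ?thesis unfolding DD DBm BmD BB using c by (intro eq_matI, auto)
  qed
  have TR: "(1\<^sub>m N - Bt) * (1\<^sub>m N + Bt) = 1\<^sub>m N"
  proof -
    have "(1\<^sub>m N - Bt) * (1\<^sub>m N + Bt) = 1\<^sub>m N * (1\<^sub>m N + Bt) - Bt * (1\<^sub>m N + Bt)" by (rule dlm_gen, insert c, auto)
    also have "Bt * (1\<^sub>m N + Bt) = Bt * 1\<^sub>m N + Bt * Bt" by (rule dr_gen, insert c, auto)
    finally show ?thesis unfolding BtBt using c by (intro eq_matI, auto)
  qed
  show "\<exists>Li. Li \<in> carrier_mat N N \<and> Li * L = 1\<^sub>m N"
  proof (intro exI conjI)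
    have S: "D + Bm \<in> carrier_mat N N" and T: "1\<^sub>m N - Bt \<in> carrier_mat N N" and R: "1\<^sub>m N + Bt \<in> carrier_mat N N"
      using c by (auto intro: minus_carrier_mat)
    show "(D + Bm) * (1\<^sub>m N - Bt) \<in> carrier_mat N N" using S T by simp
    have "(D + Bm) * (1\<^sub>m N - Bt) * L = ((D + Bm) * (1\<^sub>m N - Bt)) * ((1\<^sub>m N + Bt) * (D + Bm))" unfolding L1 ..
    also have "\<dots> = (D + Bm) * (((1\<^sub>m N - Bt) * (1\<^sub>m N + Bt)) * (D + Bm))"
      using S T R by (metis assoc_mult_mat mult_carrier_mat)
    also have "\<dots> = 1\<^sub>m N" unfolding TR left_mult_one_mat[OF S] by (rule SS)
    finally show "(D + Bm) * (1\<^sub>m N - Bt) * L = 1\<^sub>m N" .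
  qed
  show "\<And>v. v \<in> carrier_vec N \<Longrightarrow> Om *\<^sub>v v = 0\<^sub>v N \<Longrightarrow> L *\<^sub>v (L *\<^sub>v v) = v"
  proof -
    fix v :: "real vec" assume v: "v \<in> carrier_vec N" and Ov: "Om *\<^sub>v v = 0\<^sub>v N"
    have IDO: "(1\<^sub>m N + D) * Om = Bm + Bm"
    proof -
      have "(1\<^sub>m N + D) * Om = 1\<^sub>m N * Om + D * Om" by (rule dl_gen, insert c Om, auto)
      also have "D * Om = D * Bm - D * Bt" unfolding Om_def by (rule drm_gen, insert c, auto)
      finally show ?thesis unfolding DBm DBt Om_def using c by (intro eq_matI, auto)
    qed
    have "(Bm + Bm) *\<^sub>v v = (1\<^sub>m N + D) *\<^sub>v (Om *\<^sub>v v)" unfolding IDO[symmetric]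
      by (rule mv_gen, insert c Om v, auto)
    also have "\<dots> = 0\<^sub>v N" unfolding Ov using c by (intro eq_vecI, auto)
    finally have h: "(Bm + Bm) *\<^sub>v v = 0\<^sub>v N" .
    have Bmv: "Bm *\<^sub>v v = 0\<^sub>v N"
    proof (rule eq_vecI)
      fix i assume i: "i < dim_vec (0\<^sub>v N :: real vec)"
      have "((Bm + Bm) *\<^sub>v v) $ i = 0" using h i by simp
      hence "2 * (Bm *\<^sub>v v) $ i = 0" using i c v by (simp add: add_scalar_prod_distrib[of _ N])
      thus "(Bm *\<^sub>v v) $ i = 0\<^sub>v N $ i" using i by simp
    qed (use c in auto)
    have Btv: "Bt *\<^sub>v v = 0\<^sub>v N"
    proof (rule eq_vecI)
      fix i assume i: "i < dim_vec (0\<^sub>v N :: real vec)"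
      have e: "Om *\<^sub>v v = Bm *\<^sub>v v - Bt *\<^sub>v v" unfolding Om_def
        by (rule minus_mult_distrib_mat_vec, insert c v, auto)
      have "(Om *\<^sub>v v) $ i = 0" using Ov i by simp
      hence "(Bm *\<^sub>v v) $ i - (Bt *\<^sub>v v) $ i = 0" unfolding e using i c v by simp
      thus "(Bt *\<^sub>v v) $ i = 0\<^sub>v N $ i" using Bmv i c v by simp
    qed (use c in auto)
    have one_plus: "\<And>x. x \<in> carrier_vec N \<Longrightarrow> Bt *\<^sub>v x = 0\<^sub>v N \<Longrightarrow> (1\<^sub>m N + Bt) *\<^sub>v x = x"
    proof -
      fix x :: "real vec" assume x: "x \<in> carrier_vec N" and Bx: "Bt *\<^sub>v x = 0\<^sub>v N"
      have "(1\<^sub>m N + Bt) *\<^sub>v x = 1\<^sub>m N *\<^sub>v x + Bt *\<^sub>v x" by (rule add_mult_distrib_mat_vec, insert c x, auto)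
      thus "(1\<^sub>m N + Bt) *\<^sub>v x = x" unfolding Bx using x by simp
    qed
    have Dv: "D *\<^sub>v v \<in> carrier_vec N" using c v by auto
    have Lv: "L *\<^sub>v v = D *\<^sub>v v"
    proof -
      have "L *\<^sub>v v = (1\<^sub>m N + Bt) *\<^sub>v ((D + Bm) *\<^sub>v v)" unfolding L1 by (rule mv_gen, insert c v, auto)
      also have "(D + Bm) *\<^sub>v v = D *\<^sub>v v + Bm *\<^sub>v v" by (rule add_mult_distrib_mat_vec, insert c v, auto)
      also have "\<dots> = D *\<^sub>v v" unfolding Bmv using Dv by simp
      also have "Bt *\<^sub>v (D *\<^sub>v v) = (Bt * D) *\<^sub>v v" by (rule mv_gen[symmetric], insert c v, auto)
      hence "Bt *\<^sub>v (D *\<^sub>v v) = 0\<^sub>v N" unfolding BtD Btv .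
      hence "(1\<^sub>m N + Bt) *\<^sub>v (D *\<^sub>v v) = D *\<^sub>v v" by (rule one_plus[OF Dv])
      finally show ?thesis .
    qed
    have SD: "(D + Bm) * D = 1\<^sub>m N - Bm"
    proof -
      have "(D + Bm) * D = D * D + Bm * D" by (rule dl_gen, insert c, auto)
      thus ?thesis unfolding DD BmD using c by (intro eq_matI, auto)
    qed
    have "L *\<^sub>v (L *\<^sub>v v) = (1\<^sub>m N + Bt) *\<^sub>v ((D + Bm) *\<^sub>v (D *\<^sub>v v))" unfolding Lv unfolding L1
      by (rule mv_gen, insert c Dv, auto)
    also have "(D + Bm) *\<^sub>v (D *\<^sub>v v) = ((D + Bm) * D) *\<^sub>v v" by (rule mv_gen[symmetric], insert c v, auto)
    also have "\<dots> = 1\<^sub>m N *\<^sub>v v - Bm *\<^sub>v v" unfolding SD by (rule minus_mult_distrib_mat_vec, insert c v, auto)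
    also have "\<dots> = v" unfolding Bmv using v by simp
    also have "(1\<^sub>m N + Bt) *\<^sub>v v = v" by (rule one_plus[OF v Btv])
    finally show "L *\<^sub>v (L *\<^sub>v v) = v" .
  qed
qed




context
  fixes V :: "'a set" and E :: "'a set set" and f :: "nat \<Rightarrow> 'a set" and N :: nat
  assumes sg: "simple_graph V E" and bij: "bij_betw f {0..<N} (simplices V E)"
begin

lemma finV: "finite V" using sg unfolding simple_graph_def by auto
lemma edge: "e \<in> E \<Longrightarrow> e \<subseteq> V \<and> card e = 2" using sg unfolding simple_graph_def by auto
lemma fi: "i < N \<Longrightarrow> f i \<in> simplices V E" using bij unfolding bij_betw_def by auto
lemma finj: "i < N \<Longrightarrow> j < N \<Longrightarrow> f i = f j \<longleftrightarrow> i = j"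
  using bij unfolding bij_betw_def inj_on_def by auto
lemma vert: "i < N \<Longrightarrow> f i \<notin> E \<Longrightarrow> \<exists>v\<in>V. f i = {v}"
  using fi unfolding simplices_def by auto
lemma sing_notE: "{v} \<notin> E" using edge[of "{v}"] by auto
lemma fsurj: "s \<in> simplices V E \<Longrightarrow> \<exists>k<N. f k = s"
  using bij unfolding bij_betw_def by (metis atLeastLessThan_iff imageE)
lemma fne: "i < N \<Longrightarrow> f i \<noteq> {}"
  using fi edge[of "f i"] unfolding simplices_def by fastforce

definition gds :: "real list" where
  "gds = map (\<lambda>i. if f i \<in> E then -1 else 1) [0..<N]"

definition gD :: "real mat" where
  "gD = diagm gds"

lemma gds_len: "length gds = N" unfolding gds_def by simp

definition gB :: "real mat" where
  "gB = mat N N (\<lambda>(i,j). if f i \<notin> E \<and> f j \<in> E \<and> f i \<subseteq> f j then 1 else 0)"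

lemma gD_carrier: "gD \<in> carrier_mat N N" unfolding gD_def using diagm_carrier[of gds] gds_len by simp
lemma gB_carrier: "gB \<in> carrier_mat N N" unfolding gB_def by auto

lemma gD_index: "i < N \<Longrightarrow> j < N \<Longrightarrow> gD $$ (i,j) = (if i = j then (if f i \<in> E then -1 else 1) else 0)"
  unfolding gD_def using gds_len by (simp add: gds_def)

lemma gD_T: "transpose_mat gD = gD"
  using gD_carrier by (intro eq_matI, auto simp: gD_index)

lemma gD_sq: "gD * gD = 1\<^sub>m N"
  unfolding diagm_mult_left[OF gD_carrier gds_len, folded gD_def]
  by (intro eq_matI, auto simp: gD_index gds_def)

lemma gB_sq: "gB * gB = 0\<^sub>m N N"
proof (rule eq_matI)
  fix i j assume "i < dim_row (0\<^sub>m N N :: real mat)" "j < dim_col (0\<^sub>m N N :: real mat)"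
  hence i: "i < N" and j: "j < N" by auto
  have "(gB * gB) $$ (i,j) = (\<Sum>k\<in>{0..<N}. gB $$ (i,k) * gB $$ (k,j))"
    using i j gB_carrier by (auto simp: scalar_prod_def)
  also have "\<dots> = 0" by (rule sum.neutral, insert i j, auto simp: gB_def)
  finally show "(gB * gB) $$ (i,j) = 0\<^sub>m N N $$ (i,j)" using i j by simp
qed (use gB_carrier in auto)

lemma gB_D: "gB * gD = - gB"
  unfolding gD_def diagm_mult_right[OF gB_carrier gds_len]
  by (intro eq_matI, auto simp: gB_def gds_def)

lemma gD_B: "gD * gB = gB"
  unfolding gD_def diagm_mult_left[OF gB_carrier gds_len]
  by (intro eq_matI, auto simp: gB_def gds_def)

lemma card_inter_edges:
  assumes e: "e \<in> E" and e': "e' \<in> E" and ne: "e \<noteq> e'"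
  shows "card (e \<inter> e') = (if e \<inter> e' \<noteq> {} then 1 else 0)"
proof -
  have fe: "finite e" "card e = 2" using edge[OF e] finV finite_subset by auto
  have fe': "finite e'" "card e' = 2" using edge[OF e'] finV finite_subset by auto
  have le: "card (e \<inter> e') \<le> 2" using card_mono[OF fe(1), of "e \<inter> e'"] fe by auto
  have "card (e \<inter> e') \<noteq> 2"
  proof
    assume c: "card (e \<inter> e') = 2"
    have "e \<inter> e' = e" using card_subset_eq[OF fe(1), of "e \<inter> e'"] c fe by auto
    moreover have "e \<inter> e' = e'" using card_subset_eq[OF fe'(1), of "e \<inter> e'"] c fe' by auto
    ultimately show False using ne by auto
  qed
  hence "card (e \<inter> e') \<le> 1" using le by auto
  moreover have "card (e \<inter> e') = 0 \<longleftrightarrow> e \<inter> e' = {}" using fe by auto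
  ultimately show ?thesis by auto
qed

lemma BtB_index:
  assumes i: "i < N" and j: "j < N" and ei: "f i \<in> E" and ej: "f j \<in> E"
  shows "(transpose_mat gB * gB) $$ (i,j) = real (card (f i \<inter> f j))"
proof -
  have "(transpose_mat gB * gB) $$ (i,j) = (\<Sum>k\<in>{0..<N}. gB $$ (k,i) * gB $$ (k,j))"
    using i j gB_carrier by (auto simp: scalar_prod_def)
  also have "\<dots> = (\<Sum>k\<in>{0..<N}. if f k \<notin> E \<and> f k \<subseteq> f i \<inter> f j then 1 else 0)"
    by (rule sum.cong, insert i j ei ej, auto simp: gB_def)
  also have "\<dots> = real (card {k\<in>{0..<N}. f k \<notin> E \<and> f k \<subseteq> f i \<inter> f j})"
    by (simp add: sum.If_cases, intro arg_cong[of _ _ card], auto)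
  also have "{k\<in>{0..<N}. f k \<notin> E \<and> f k \<subseteq> f i \<inter> f j} = {k\<in>{0..<N}. f k \<in> (\<lambda>v. {v}) ` (f i \<inter> f j)}"
  proof -
    have "\<And>k. k < N \<Longrightarrow> (f k \<notin> E \<and> f k \<subseteq> f i \<inter> f j) = (f k \<in> (\<lambda>v. {v}) ` (f i \<inter> f j))"
    proof -
      fix k assume k: "k < N"
      show "(f k \<notin> E \<and> f k \<subseteq> f i \<inter> f j) = (f k \<in> (\<lambda>v. {v}) ` (f i \<inter> f j))"
      proof
        assume h: "f k \<notin> E \<and> f k \<subseteq> f i \<inter> f j"
        from vert[OF k] h obtain v where "f k = {v}" by auto
        thus "f k \<in> (\<lambda>v. {v}) ` (f i \<inter> f j)" using h by auto
      next
        assume "f k \<in> (\<lambda>v. {v}) ` (f i \<inter> f j)"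
        thus "f k \<notin> E \<and> f k \<subseteq> f i \<inter> f j" using sing_notE by auto
      qed
    qed
    thus ?thesis by auto
  qed
  also have "card {k\<in>{0..<N}. f k \<in> (\<lambda>v. {v}) ` (f i \<inter> f j)} = card ((\<lambda>v. {v}) ` (f i \<inter> f j))"
  proof -
    have sub: "(\<lambda>v. {v}) ` (f i \<inter> f j) \<subseteq> simplices V E"
      using edge[OF ei] unfolding simplices_def by auto
    have inj: "inj_on f {0..<N}" using bij by (simp add: bij_betw_def)
    have "bij_betw f {k\<in>{0..<N}. f k \<in> (\<lambda>v. {v}) ` (f i \<inter> f j)} ((\<lambda>v. {v}) ` (f i \<inter> f j))"
      unfolding bij_betw_def
    proof
      show "inj_on f {k\<in>{0..<N}. f k \<in> (\<lambda>v. {v}) ` (f i \<inter> f j)}" by (rule inj_on_subset[OF inj], auto)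
      show "f ` {k\<in>{0..<N}. f k \<in> (\<lambda>v. {v}) ` (f i \<inter> f j)} = (\<lambda>v. {v}) ` (f i \<inter> f j)"
      proof
        show "f ` {k\<in>{0..<N}. f k \<in> (\<lambda>v. {v}) ` (f i \<inter> f j)} \<subseteq> (\<lambda>v. {v}) ` (f i \<inter> f j)" by blast
        show "(\<lambda>v. {v}) ` (f i \<inter> f j) \<subseteq> f ` {k\<in>{0..<N}. f k \<in> (\<lambda>v. {v}) ` (f i \<inter> f j)}"
        proof
          fix s assume s: "s \<in> (\<lambda>v. {v}) ` (f i \<inter> f j)"
          then obtain k where k: "k < N" "f k = s" using fsurj sub by blast
          hence "k \<in> {k\<in>{0..<N}. f k \<in> (\<lambda>v. {v}) ` (f i \<inter> f j)}" using s by simp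
          thus "s \<in> f ` {k\<in>{0..<N}. f k \<in> (\<lambda>v. {v}) ` (f i \<inter> f j)}" using k(2) by (rule rev_image_eqI[OF _ sym])
        qed
      qed
    qed
    thus ?thesis by (rule bij_betw_same_card)
  qed
  also have "\<dots> = card (f i \<inter> f j)" by (rule card_image, auto simp: inj_on_def)
  finally show ?thesis .
qed

lemma conn_rhs_carrier: "gD + gB + transpose_mat gB + transpose_mat gB * gB \<in> carrier_mat N N"
proof -
  have "transpose_mat gB * gB \<in> carrier_mat N N" using gB_carrier by simp
  thus ?thesis using gD_carrier gB_carrier by simp
qed

lemma conn_carrier: "connection_mat N f \<in> carrier_mat N N"
  unfolding connection_mat_def by simp

lemma conn_decomp:
  "connection_mat N f = gD + gB + transpose_mat gB + transpose_mat gB * gB"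
proof (rule eq_matI)
  fix i j assume "i < dim_row (gD + gB + transpose_mat gB + transpose_mat gB * gB)"
    "j < dim_col (gD + gB + transpose_mat gB + transpose_mat gB * gB)"
  hence i: "i < N" and j: "j < N" using gD_carrier gB_carrier by auto
  have rhs: "(gD + gB + transpose_mat gB + transpose_mat gB * gB) $$ (i,j) =
     gD $$ (i,j) + gB $$ (i,j) + gB $$ (j,i) + (transpose_mat gB * gB) $$ (i,j)"
    using i j gD_carrier gB_carrier by simp
  have lhs: "connection_mat N f $$ (i,j) = (if f i \<inter> f j \<noteq> {} then 1 else 0)"
    unfolding connection_mat_def using i j by simp
  have BtB0: "\<not> (f i \<in> E \<and> f j \<in> E) \<Longrightarrow> (transpose_mat gB * gB) $$ (i,j) = 0"
  proof -
    assume h: "\<not> (f i \<in> E \<and> f j \<in> E)"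
    have "(transpose_mat gB * gB) $$ (i,j) = (\<Sum>k\<in>{0..<N}. gB $$ (k,i) * gB $$ (k,j))"
      using i j gB_carrier by (auto simp: scalar_prod_def)
    also have "\<dots> = 0" by (rule sum.neutral, insert i j h, auto simp: gB_def)
    finally show ?thesis .
  qed
  show "connection_mat N f $$ (i,j) = (gD + gB + transpose_mat gB + transpose_mat gB * gB) $$ (i,j)"
  proof (cases "f i \<in> E")
    case ei: True
    show ?thesis
    proof (cases "f j \<in> E")
      case ej: True
      have "(transpose_mat gB * gB) $$ (i,j) = real (card (f i \<inter> f j))" by (rule BtB_index[OF i j ei ej])
      show ?thesis
      proof (cases "i = j")
        case True
        have g: "gB $$ (i,j) = 0" "gB $$ (j,i) = 0" using i j ei ej by (auto simp: gB_def)
        show ?thesis unfolding rhs lhs g BtB_index[OF i j ei ej] using True edge[OF ei] fne[OF i] i ei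
          by (simp add: gD_index)
      next
        case False
        hence "f i \<noteq> f j" using finj[OF i j] by auto
        have g: "gB $$ (i,j) = 0" "gB $$ (j,i) = 0" using i j ei ej by (auto simp: gB_def)
        show ?thesis unfolding rhs lhs g BtB_index[OF i j ei ej] card_inter_edges[OF ei ej \<open>f i \<noteq> f j\<close>] using i j False
          by (simp add: gD_index)
      qed
    next
      case ej: False
      from vert[OF j ej] obtain w where w: "w \<in> V" "f j = {w}" by auto
      have "i \<noteq> j" using ei ej by auto
      have z: "(transpose_mat gB * gB) $$ (i,j) = 0" using BtB0 ej by auto
      thus ?thesis unfolding rhs lhs z using i j ei ej w \<open>i \<noteq> j\<close>
        by (auto simp: gD_index gB_def)
    qed
  next
    case ei: False
    from vert[OF i ei] obtain u where u: "u \<in> V" "f i = {u}" by auto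
    show ?thesis
    proof (cases "f j \<in> E")
      case ej: True
      have "i \<noteq> j" using ei ej by auto
      have z: "(transpose_mat gB * gB) $$ (i,j) = 0" using BtB0 ei by auto
      thus ?thesis unfolding rhs lhs z using i j ei ej u \<open>i \<noteq> j\<close>
        by (auto simp: gD_index gB_def)
    next
      case ej: False
      from vert[OF j ej] obtain w where w: "w \<in> V" "f j = {w}" by auto
      have iff: "(f i \<inter> f j \<noteq> {}) = (i = j)" using u w finj[OF i j] by auto
      have z: "(transpose_mat gB * gB) $$ (i,j) = 0" using BtB0 ei by auto
      have g: "gB $$ (i,j) = 0" "gB $$ (j,i) = 0" using i j ei ej by (auto simp: gB_def)
      show ?thesis unfolding rhs lhs z g iff using i j ei ej
        by (simp add: gD_index)
    qed
  qed
qed (simp_all only: carrier_matD[OF conn_rhs_carrier] carrier_matD[OF conn_carrier])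

end




theorem mainTheorem5:
  fixes V :: "'a set" and E :: "'a set set" and f :: "nat \<Rightarrow> 'a set"
  assumes "simple_graph V E"
    and "even (card V + card E)"
    and "bij_betw f {0..<card V + card E} (simplices V E)"
  shows "\<exists>S. symplectic_mat ((card V + card E) div 2) S \<and>
           similar_mat (connection_mat (card V + card E) f ^\<^sub>m 2) S"
proof -
  define N where "N = card V + card E"
  have sg: "simple_graph V E" by fact
  have bij: "bij_betw f {0..<N} (simplices V E)" using assms(3) unfolding N_def .
  note D = gD_carrier[OF sg bij] and Bm = gB_carrier[OF sg bij]
  note R = rel_alg[OF D Bm gD_sq[OF sg bij] gB_sq[OF sg bij] gB_D[OF sg bij] gD_B[OF sg bij] gD_T[OF sg bij]]
  note dec = conn_decomp[OF sg bij]
  let ?L = "connection_mat N f"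
  have L: "?L \<in> carrier_mat N N" unfolding connection_mat_def by simp
  from R(4)[folded dec] obtain Li where Li: "Li \<in> carrier_mat N N" "Li * ?L = 1\<^sub>m N" by auto
  have Om: "gB E f N - transpose_mat (gB E f N) \<in> carrier_mat N N" using Bm by (simp add: minus_carrier_mat)
  have N2: "N = 2 * (N div 2)" using assms(2) unfolding N_def by simp
  from abstract_main[OF L Li(1) Li(2) R(1)[folded dec] Om R(5) R(2)[folded dec] R(3)[folded dec] N2]
  obtain S where S: "symplectic_mat (N div 2) S" "similar_mat (?L * ?L) S" by auto
  have "?L ^\<^sub>m 2 = ?L * ?L" using L by (simp add: numeral_2_eq_2)
  thus ?thesis using S unfolding N_def by auto
qed


end
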